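(* The quadratic vector equation $Mx=a+b(x,x)$ has at least one (nonnegative) solution if and only if Condition A1 holds. Moreover, if it has a solution, then it has a minimal solution.
   Context: Inequalities between vectors/matrices are componentwise. An M-matrix is a matrix $sI-P$ with $P\geq0$ entrywise and $s\geq\rho(P)$ ($\rho$ = spectral radius). Let $M\in\mathbb R^{n\times n}$ be a nonsingular M-matrix, $a\in\mathbb R^n$ with $a\geq 0$, and $b:\mathbb R^n\times\mathbb R^n\to\mathbb R^n$ a bilinear map (not necessarily symmetric) with $b(x,y)\geq 0$ whenever $x,y\geq 0$. A solution of the quadratic vector equation $Mx=a+b(x,x)$ means a vector $x\geq 0$ satisfying it; a solution $x_\ast$ is minimal if $x_\ast\leq y$ for every solution $y$. A linear map $l:\mathbb R^n\to\mathbb R^m$ is weakly positive if $l(x)\geq 0$ and $l(x)\neq 0$ whenever $x\geq 0$, $x\neq 0$. Condition A1: there exist a weakly positive linear map $l:\mathbb R^n\to\mathbb R^m$ (for some $m$) and a vector $z\in\mathbb R^m$, $z\geq 0$, such that for every $x\geq 0$, $l(x)\leq z$ implies $l\big(M^{-1}(a+b(x,x))\big)\leq z$. *)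

theory Defs
  imports "HOL-Analysis.Analysis"
begin

definition cplx_eigenvalues :: "real^'n^'n \<Rightarrow> complex set" where
  "cplx_eigenvalues P = {lam. \<exists>v :: complex^'n. v \<noteq> 0 \<and>
      (\<chi> i j. complex_of_real (P $ i $ j)) *v v = lam *s v}"

definition spec_radius :: "real^'n^'n \<Rightarrow> real" where
  "spec_radius P = Max (cmod ` cplx_eigenvalues P)"

definition M_matrix :: "real^'n^'n \<Rightarrow> bool" where
  "M_matrix M \<longleftrightarrow> (\<exists>s P. M = s *\<^sub>R mat 1 - P \<and> (\<forall>i j. P $ i $ j \<ge> 0) \<and> s \<ge> spec_radius P)"

definition nonsingular_M_matrix :: "real^'n^'n \<Rightarrow> bool" where
  "nonsingular_M_matrix M \<longleftrightarrow> M_matrix M \<and> invertible M"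

definition qve_solution :: "real^'n^'n \<Rightarrow> real^'n \<Rightarrow> (real^'n \<Rightarrow> real^'n \<Rightarrow> real^'n) \<Rightarrow> real^'n \<Rightarrow> bool" where
  "qve_solution M a b x \<longleftrightarrow> 0 \<le> x \<and> M *v x = a + b x x"

definition qve_minimal_solution :: "real^'n^'n \<Rightarrow> real^'n \<Rightarrow> (real^'n \<Rightarrow> real^'n \<Rightarrow> real^'n) \<Rightarrow> real^'n \<Rightarrow> bool" where
  "qve_minimal_solution M a b x \<longleftrightarrow> qve_solution M a b x \<and> (\<forall>y. qve_solution M a b y \<longrightarrow> x \<le> y)"

(* A linear map l : R^n \<rightarrow> R^m, with m arbitrary, is represented as a function
   real^'n \<Rightarrow> nat \<Rightarrow> real whose components 0..m-1 are relevant. *)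
definition weakly_positive :: "nat \<Rightarrow> (real^'n \<Rightarrow> nat \<Rightarrow> real) \<Rightarrow> bool" where
  "weakly_positive m l \<longleftrightarrow> (\<forall>i<m. linear (\<lambda>x. l x i)) \<and>
     (\<forall>x. 0 \<le> x \<and> x \<noteq> 0 \<longrightarrow> (\<forall>i<m. 0 \<le> l x i) \<and> (\<exists>i<m. l x i \<noteq> 0))"

definition condition_A1 :: "real^'n^'n \<Rightarrow> real^'n \<Rightarrow> (real^'n \<Rightarrow> real^'n \<Rightarrow> real^'n) \<Rightarrow> bool" where
  "condition_A1 M a b \<longleftrightarrow> (\<exists>m l z. weakly_positive m l \<and> (\<forall>i<m. 0 \<le> z i) \<and>
     (\<forall>x. 0 \<le> x \<longrightarrow> (\<forall>i<m. l x i \<le> z i) \<longrightarrow>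
          (\<forall>i<m. l (matrix_inv M *v (a + b x x)) i \<le> z i)))"

end

theory Submission
  imports Defs "HOL-Computational_Algebra.Polynomial"
begin


lemma mono_iter_fix:
  fixes F :: "real^'n \<Rightarrow> real^'n"
  assumes cont: "\<And>x. isCont F x"
    and mono: "\<And>x y. 0 \<le> x \<Longrightarrow> x \<le> y \<Longrightarrow> F x \<le> F y"
    and F0: "0 \<le> F 0"
    and bnd: "\<And>k. (F ^^ k) 0 \<le> u"
  shows "\<exists>x. 0 \<le> x \<and> F x = x \<and> (\<forall>y. 0 \<le> y \<longrightarrow> F y \<le> y \<longrightarrow> x \<le> y)"
proof -
  define X where "X k = (F ^^ k) 0" for k
  have XS: "X (Suc k) = F (X k)" for k by (simp add: X_def)
  have X0: "X 0 = 0" by (simp add: X_def)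
  have A: "0 \<le> X k \<and> X k \<le> X (Suc k)" for k
  proof (induction k)
    case 0 then show ?case using F0 by (simp add: XS X0)
  next
    case (Suc k)
    then have "0 \<le> X (Suc k)" by (meson order_trans)
    moreover have "X (Suc k) \<le> X (Suc (Suc k))" unfolding XS[of "Suc k"] XS[of k]
      using Suc mono by (simp add: XS)
    ultimately show ?case by simp
  qed
  have B: "X k \<le> u" for k using bnd by (simp add: X_def)
  define x where "x = (\<chi> i. SUP k. X k $ i)"
  have conv_i: "(\<lambda>k. X k $ i) \<longlonglongrightarrow> x $ i" for i
  proof -
    have "incseq (\<lambda>k. X k $ i)"
      by (rule incseq_SucI) (use A in \<open>auto simp: less_eq_vec_def\<close>)
    moreover have "bdd_above (range (\<lambda>k. X k $ i))"
      using B by (auto simp: less_eq_vec_def intro!: bdd_aboveI[where M="u $ i"])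
    ultimately show ?thesis unfolding x_def by (simp add: LIMSEQ_incseq_SUP)
  qed
  have conv: "X \<longlonglongrightarrow> x" by (rule vec_tendstoI) (use conv_i in auto)
  have "(\<lambda>k. F (X k)) \<longlonglongrightarrow> F x" using cont conv isCont_tendsto_compose by blast
  moreover have "(\<lambda>k. F (X k)) \<longlonglongrightarrow> x" unfolding XS[symmetric]
    using conv by (rule LIMSEQ_Suc)
  ultimately have fx: "F x = x" using LIMSEQ_unique by blast
  have x0: "0 \<le> x" unfolding less_eq_vec_def
    using A by (auto intro!: Lim_component_ge_cart[OF conv] simp: less_eq_vec_def)
  have "x \<le> y" if "0 \<le> y" "F y \<le> y" for y
  proof -
    have "X k \<le> y" for k
    proof (induction k)
      case 0 then show ?case using that by (simp add: X0)
    next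
      case (Suc k) then show ?case using mono[of "X k" y] A that by (simp add: XS)
    qed
    then show ?thesis unfolding less_eq_vec_def
      by (auto intro!: Lim_component_le_cart[OF conv] simp: less_eq_vec_def)
  qed
  then show ?thesis using fx x0 by blast
qed



lemma invertible_iff_ker:
  fixes A :: "'a::field^'n^'n"
  shows "invertible A \<longleftrightarrow> (\<forall>x. A *v x = 0 \<longrightarrow> x = 0)"
  using invertible_left_inverse matrix_left_invertible_ker by blast

lemma finite_cplx_eigenvalues: "finite (cplx_eigenvalues (P::real^'n^'n))"
proof -
  define A where "A = (\<chi> i j. complex_of_real (P $ i $ j))"
  define n where "n = CARD('n)"
  define f where "f p i = [: - A$i$p i, if i = p i then 1 else 0 :]" for p :: "'n \<Rightarrow> 'n" and i
  define q where "q = (\<Sum>p\<in>{p. p permutes (UNIV::'n set)}. smult (of_int (sign p)) (\<Prod>i\<in>UNIV. f p i))"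
  have polyq: "poly q l = det (mat l - A)" for l
    unfolding q_def det_def poly_sum poly_smult poly_prod
    by (intro sum.cong refl arg_cong2[where f="(*)"] prod.cong) (auto simp: f_def mat_def)
  have c_id: "coeff (\<Prod>i\<in>UNIV. f id i) n = 1"
  proof -
    have "degree (\<Prod>i\<in>UNIV. f id i) = (\<Sum>i\<in>(UNIV::'n set). degree (f id i))"
      by (rule degree_prod_eq_sum_degree) (auto simp: f_def)
    also have "\<dots> = n" by (simp add: f_def n_def)
    finally have "degree (\<Prod>i\<in>UNIV. f id i) = n" .
    moreover have "lead_coeff (\<Prod>i\<in>UNIV. f id i) = 1"
      by (simp add: lead_coeff_prod f_def)
    ultimately show ?thesis by simp
  qed
  have c_other: "coeff (\<Prod>i\<in>UNIV. f p i) n = 0" if pid: "p \<noteq> id" for p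
  proof -
    obtain j where j: "p j \<noteq> j" using pid by (auto simp: fun_eq_iff)
    have "degree (\<Prod>i\<in>UNIV. f p i) \<le> (\<Sum>i\<in>UNIV. (degree \<circ> f p) i)"
      by (rule degree_prod_sum_le) simp
    also have "\<dots> = (\<Sum>i\<in>UNIV. if i = p i then 1 else 0)"
      by (intro sum.cong) (auto simp: f_def)
    also have "\<dots> = card {i. i = p i}" by (simp add: sum.If_cases)
    also have "\<dots> < n" unfolding n_def
      by (rule psubset_card_mono) (use j in \<open>auto simp: set_eq_iff\<close>)
    finally show ?thesis by (simp add: coeff_eq_0)
  qed
  have "coeff q n = (\<Sum>p\<in>{p. p permutes (UNIV::'n set)}. of_int (sign p) * coeff (\<Prod>i\<in>UNIV. f p i) n)"
    by (simp add: q_def coeff_sum)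
  also have "\<dots> = (\<Sum>p\<in>{p. p permutes (UNIV::'n set)}. if p = id then 1 else 0)"
    by (intro sum.cong refl) (auto simp: c_id c_other)
  also have "\<dots> = 1" by (simp add: sum.delta' permutes_id)
  finally have "q \<noteq> 0" by auto
  have "cplx_eigenvalues P \<subseteq> {l. poly q l = 0}"
  proof
    fix l assume "l \<in> cplx_eigenvalues P"
    then obtain v where v: "v \<noteq> 0" "A *v v = l *s v" by (auto simp: cplx_eigenvalues_def A_def)
    have ml: "mat l *v v = l *s v"
      by (auto simp: vec_eq_iff matrix_vector_mult_def mat_def if_distrib[of "\<lambda>x. x * y" for y] cong: if_cong)
    have "(mat l - A) *v v = 0"
      using v by (simp add: matrix_vector_mult_diff_rdistrib ml)
    then have "\<not> invertible (mat l - A)" using v invertible_iff_ker by blast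
    then show "l \<in> {l. poly q l = 0}" by (simp add: polyq invertible_det_nz)
  qed
  then show ?thesis using poly_roots_finite[OF \<open>q \<noteq> 0\<close>] finite_subset by blast
qed



lemma scaleR_mat1_mult: "((t::real) *\<^sub>R mat 1) *v (x::real^'n) = t *\<^sub>R x"
  by (simp add: vec_eq_iff matrix_vector_mult_def mat_def mult.assoc sum_distrib_left[symmetric] if_distrib[of "\<lambda>x. x * y" for y] cong: if_cong)

lemma inv_gt_specrad:
  fixes P :: "real^'n^'n"
  assumes "t > spec_radius P"
  shows "invertible (t *\<^sub>R mat 1 - P)"
proof (rule ccontr)
  assume "\<not> invertible (t *\<^sub>R mat 1 - P)"
  then obtain x where x: "x \<noteq> 0" "(t *\<^sub>R mat 1 - P) *v x = 0" using invertible_iff_ker by blast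
  then have Px: "P *v x = t *\<^sub>R x"
    by (simp add: matrix_vector_mult_diff_rdistrib scaleR_mat1_mult)
  define w where "w = (\<chi> i. complex_of_real (x $ i))"
  have "w \<noteq> 0" using x(1) by (auto simp: w_def vec_eq_iff)
  moreover have "(\<chi> i j. complex_of_real (P $ i $ j)) *v w = complex_of_real t *s w"
  proof -
    have "(\<Sum>j\<in>UNIV. complex_of_real (P $ i $ j) * complex_of_real (x $ j)) = complex_of_real (t * x $ i)" for i
    proof -
      have "(\<Sum>j\<in>UNIV. P $ i $ j * x $ j) = t * x $ i"
        using arg_cong[OF Px, of "\<lambda>v. v $ i"] by (simp add: matrix_vector_mult_def)
      then have "complex_of_real (\<Sum>j\<in>UNIV. P $ i $ j * x $ j) = complex_of_real (t * x $ i)" by simp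
      then show ?thesis by (simp add: of_real_sum)
    qed
    then show ?thesis by (simp add: vec_eq_iff matrix_vector_mult_def w_def)
  qed
  ultimately have "complex_of_real t \<in> cplx_eigenvalues P" unfolding cplx_eigenvalues_def by blast
  then have "cmod (complex_of_real t) \<le> spec_radius P"
    unfolding spec_radius_def by (rule Max_ge[OF finite_imageI[OF finite_cplx_eigenvalues] imageI])
  then show False using assms by simp
qed



lemma inv_props:
  assumes "invertible (A::real^'n^'n)"
  shows "A ** matrix_inv A = mat 1" "matrix_inv A ** A = mat 1"
proof -
  have "A ** matrix_inv A = mat 1 \<and> matrix_inv A ** A = mat 1"
    using assms unfolding invertible_def matrix_inv_def by (rule someI_ex)
  then show "A ** matrix_inv A = mat 1" "matrix_inv A ** A = mat 1" by auto
qed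

lemma inv_l: "invertible (A::real^'n^'n) \<Longrightarrow> matrix_inv A *v (A *v x) = x"
  by (simp add: matrix_vector_mul_assoc inv_props)

lemma inv_r: "invertible (A::real^'n^'n) \<Longrightarrow> A *v (matrix_inv A *v x) = x"
  by (simp add: matrix_vector_mul_assoc inv_props)

lemma nonneg_mono:
  assumes "\<forall>i j. 0 \<le> P $ i $ j" "x \<le> y"
  shows "P *v x \<le> (P::real^'n^'n) *v y"
  using assms unfolding less_eq_vec_def matrix_vector_mult_def
  by (auto intro!: sum_mono mult_left_mono)

lemma pos_mono:
  assumes "\<forall>y. 0 \<le> y \<longrightarrow> 0 \<le> (R::real^'n^'n) *v y" "a \<le> b"
  shows "R *v a \<le> R *v b"
proof -
  have "0 \<le> R *v (b - a)" using assms by simp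
  then show ?thesis by (simp add: matrix_vector_mult_diff_distrib)
qed

lemma Qv: "((t::real) *\<^sub>R mat 1 - P) *v (x::real^'n) = t *\<^sub>R x - P *v x"
  by (simp add: matrix_vector_mult_diff_rdistrib scaleR_mat1_mult)

lemma comp_le_norm: "(x::real^'n) $ i \<le> norm x"
  using component_le_norm_cart[of x i] by simp

lemma base_pos:
  fixes P :: "real^'n^'n"
  assumes P0: "\<forall>i j. 0 \<le> P $ i $ j"
    and t: "t \<ge> (\<Sum>i\<in>UNIV. \<Sum>j\<in>UNIV. P $ i $ j) + 1"
    and inv: "invertible (t *\<^sub>R mat 1 - P)"
    and y0: "0 \<le> y"
  shows "0 \<le> matrix_inv (t *\<^sub>R mat 1 - P) *v y"
proof -
  define c where "c = (\<Sum>i\<in>UNIV. \<Sum>j\<in>UNIV. P $ i $ j)"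
  have c0: "0 \<le> c" unfolding c_def using P0 by (simp add: sum_nonneg)
  have tpos: "t > 0" using t c0 c_def by linarith
  define S where "S x = (\<Sum>i\<in>UNIV. (x::real^'n) $ i)" for x
  define F where "F x = (1/t) *\<^sub>R (P *v x + y)" for x
  have comp_S: "x $ j \<le> S x" if "0 \<le> x" for x j
    unfolding S_def using that by (intro member_le_sum) (auto simp: less_eq_vec_def)
  have SP: "S (P *v x) \<le> c * S x" if "0 \<le> x" for x
  proof -
    have "S (P *v x) = (\<Sum>i\<in>UNIV. \<Sum>j\<in>UNIV. P $ i $ j * x $ j)"
      by (simp add: S_def matrix_vector_mult_def)
    also have "\<dots> \<le> (\<Sum>i\<in>UNIV. \<Sum>j\<in>UNIV. P $ i $ j * S x)"
      using P0 comp_S[OF that] by (intro sum_mono mult_left_mono) auto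
    also have "\<dots> = c * S x" by (simp add: c_def sum_distrib_right)
    finally show ?thesis .
  qed
  have Px0: "0 \<le> P *v x" if "0 \<le> x" for x
    using nonneg_mono[OF P0 that] by simp
  have F0: "0 \<le> F x" if "0 \<le> x" for x
    using Px0[OF that] y0 tpos unfolding F_def by (simp add: less_eq_vec_def)
  have SF: "S (F x) = (S (P *v x) + S y) / t" for x
    by (simp add: F_def S_def sum.distrib sum_divide_distrib[symmetric])
  have Sy0: "0 \<le> S y" using y0 unfolding S_def by (simp add: sum_nonneg less_eq_vec_def)
  have I: "0 \<le> (F ^^ k) 0 \<and> S ((F ^^ k) 0) \<le> S y" for k
  proof (induction k)
    case 0 then show ?case using Sy0 by (simp add: S_def)
  next
    case (Suc k)
    define x where "x = (F ^^ k) 0"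
    have x0: "0 \<le> x" and Sx: "S x \<le> S y" using Suc by (auto simp: x_def)
    have "S (P *v x) + S y \<le> c * S y + S y"
      using SP[OF x0] mult_left_mono[OF Sx c0] by linarith
    also have "\<dots> \<le> t * S y" using t Sy0 unfolding c_def[symmetric]
      by (metis add.commute distrib_right mult.commute mult_1 mult_right_mono)
    finally have "S (F x) \<le> S y" using tpos by (simp add: SF divide_le_eq mult.commute)
    then show ?case using F0[OF x0] by (simp add: x_def)
  qed
  have bnd: "(F ^^ k) 0 \<le> (\<chi> j. S y)" for k
    using I[of k] comp_S[of "(F ^^ k) 0"] by (auto simp: less_eq_vec_def intro: order_trans)
  have mono: "F x \<le> F x'" if "0 \<le> x" "x \<le> x'" for x x'
    using nonneg_mono[OF P0 that(2)] tpos unfolding F_def by (auto simp: less_eq_vec_def intro!: divide_right_mono)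
  have cont: "isCont F x" for x
    unfolding F_def by (intro continuous_intros bounded_linear.isCont[OF matrix_vector_mul_bounded_linear])
  obtain x where x: "0 \<le> x" "F x = x"
    using mono_iter_fix[OF cont mono F0[of 0] bnd] by auto
  have "(t *\<^sub>R mat 1 - P) *v x = y"
  proof -
    have "t *\<^sub>R x = P *v x + y" using x(2) tpos unfolding F_def
      by (metis divide_inverse_commute mult_1 right_inverse scaleR_one scaleR_scaleR less_irrefl)
    then show ?thesis by (simp add: Qv)
  qed
  then show ?thesis using inv_l[OF inv, of x] x(1) by simp
qed



lemma closure_pos:
  fixes P :: "real^'n^'n"
  assumes inv0: "invertible (t0 *\<^sub>R mat 1 - P)"
    and hyp: "\<And>u. u > t0 \<Longrightarrow> invertible (u *\<^sub>R mat 1 - P) \<and> (\<forall>y. 0 \<le> y \<longrightarrow> 0 \<le> matrix_inv (u *\<^sub>R mat 1 - P) *v y)"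
    and y0: "0 \<le> y"
  shows "0 \<le> matrix_inv (t0 *\<^sub>R mat 1 - P) *v y"
proof -
  define R0 where "R0 = matrix_inv (t0 *\<^sub>R mat 1 - P)"
  obtain K where K: "K > 0" "\<And>z. norm (R0 *v z) \<le> norm z * K"
    using bounded_linear.pos_bounded[OF matrix_vector_mul_bounded_linear[of R0]] by blast
  show ?thesis unfolding less_eq_vec_def
  proof (rule allI, rule ccontr)
    fix i assume "\<not> (0::real^'n) $ i \<le> (matrix_inv (t0 *\<^sub>R mat 1 - P) *v y) $ i"
    then have neg: "(R0 *v y) $ i < 0" by (simp add: R0_def)
    define d where "d = - (R0 *v y) $ i"
    have d0: "d > 0" using neg d_def by simp
    define D where "D = 2*K*K*norm y"
    have D0: "D \<ge> 0" using K by (simp add: D_def)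
    define e where "e = min (1/(2*K)) (d / (D + 1))"
    have e0: "e > 0" using K d0 D0 by (simp add: e_def)
    have "e \<le> 1/(2*K)" by (simp add: e_def)
    then have eK: "e * K \<le> 1/2" using K by (simp add: field_simps)
    have "e \<le> d / (D + 1)" by (simp add: e_def)
    then have "e * (D + 1) \<le> d" using D0 by (simp add: field_simps)
    then have ed: "e * D < d" using e0 by (simp add: algebra_simps)
    define u where "u = t0 + e"
    define x where "x = matrix_inv (u *\<^sub>R mat 1 - P) *v y"
    have hu: "invertible (u *\<^sub>R mat 1 - P) \<and> (\<forall>y. 0 \<le> y \<longrightarrow> 0 \<le> matrix_inv (u *\<^sub>R mat 1 - P) *v y)"
      using hyp[of u] e0 by (simp add: u_def)
    have x0: "0 \<le> x" using hu y0 by (simp add: x_def)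
    have Qx: "(u *\<^sub>R mat 1 - P) *v x = y" using hu inv_r[of "u *\<^sub>R mat 1 - P" y] by (simp add: x_def)
    have "(t0 *\<^sub>R mat 1 - P) *v x = y - e *\<^sub>R x"
      using Qx unfolding Qv u_def by (simp add: scaleR_add_left algebra_simps)
    then have "R0 *v ((t0 *\<^sub>R mat 1 - P) *v x) = R0 *v (y - e *\<^sub>R x)" by simp
    then have xeq: "x = R0 *v y - e *\<^sub>R (R0 *v x)"
      using inv_l[OF inv0] by (simp add: R0_def matrix_vector_mult_diff_distrib matrix_vector_mult_scaleR)
    have "norm x \<le> norm (R0 *v y) + norm (e *\<^sub>R (R0 *v x))"
      by (subst xeq) (rule norm_triangle_ineq4)
    also have "\<dots> \<le> norm y * K + e * (norm x * K)"
    proof -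
      have A1: "norm (R0 *v y) \<le> norm y * K" by (rule K(2))
      have A2: "e * norm (R0 *v x) \<le> e * (norm x * K)" using K(2)[of x] e0 by (simp add: mult_left_mono)
      have "norm (e *\<^sub>R (R0 *v x)) = e * norm (R0 *v x)" using e0 by simp
      then show ?thesis using A1 A2 by linarith
    qed
    also have "\<dots> \<le> norm y * K + norm x / 2"
    proof -
      have "e * (norm x * K) = (e*K) * norm x" by simp
      also have "\<dots> \<le> (1/2) * norm x" by (rule mult_right_mono[OF eK norm_ge_zero])
      finally show ?thesis by simp
    qed
    finally have nx: "norm x \<le> 2 * K * norm y" by (simp add: algebra_simps)
    have xi: "(R0 *v y) $ i = x $ i + e * (R0 *v x) $ i"
      using arg_cong[OF xeq, of "\<lambda>v. v $ i"] by simp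
    have "- (R0 *v x) $ i \<le> norm x * K"
      using component_le_norm_cart[of "R0 *v x" i] K(2)[of x] by linarith
    also have "\<dots> \<le> 2 * K * norm y * K" using nx K by (simp add: mult_right_mono)
    finally have "- (R0 *v x) $ i \<le> D" by (simp add: D_def ac_simps)
    then have "e * (- (R0 *v x) $ i) \<le> e * D" using e0 by (intro mult_left_mono) auto
    moreover have "0 \<le> x $ i" using x0 by (simp add: less_eq_vec_def)
    ultimately have "(R0 *v y) $ i > - d" using xi ed by linarith
    then show False by (simp add: d_def)
  qed
qed



lemma step_pos:
  fixes P :: "real^'n^'n"
  assumes inv0: "invertible (t0 *\<^sub>R mat 1 - P)"
    and pos0: "\<forall>y. 0 \<le> y \<longrightarrow> 0 \<le> matrix_inv (t0 *\<^sub>R mat 1 - P) *v y"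
  shows "\<exists>\<delta>>0. \<forall>t. t0 - \<delta> < t \<longrightarrow> t \<le> t0 \<longrightarrow> invertible (t *\<^sub>R mat 1 - P) \<longrightarrow>
            (\<forall>y. 0 \<le> y \<longrightarrow> 0 \<le> matrix_inv (t *\<^sub>R mat 1 - P) *v y)"
proof -
  define R0 where "R0 = matrix_inv (t0 *\<^sub>R mat 1 - P)"
  obtain K where K: "K > 0" "\<And>z. norm (R0 *v z) \<le> norm z * K"
    using bounded_linear.pos_bounded[OF matrix_vector_mul_bounded_linear[of R0]] by blast
  have pos0': "\<forall>y. 0 \<le> y \<longrightarrow> 0 \<le> R0 *v y" using pos0 by (simp add: R0_def)
  show ?thesis
  proof (intro exI[of _ "1/(2*K)"] conjI allI impI)
    show "1/(2*K) > 0" using K by simp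
    fix t y assume t1: "t0 - 1/(2*K) < t" and t2: "t \<le> t0" and invt: "invertible (t *\<^sub>R mat 1 - P)"
      and y0: "0 \<le> (y::real^'n)"
    define \<epsilon> where "\<epsilon> = t0 - t"
    have e0: "0 \<le> \<epsilon>" using t2 by (simp add: \<epsilon>_def)
    have "\<epsilon> < 1/(2*K)" using t1 by (simp add: \<epsilon>_def)
    then have eK: "\<epsilon> * K \<le> 1/2" using K by (simp add: field_simps)
    define F where "F x = R0 *v (y + \<epsilon> *\<^sub>R x)" for x
    have mono: "F x \<le> F x'" if "0 \<le> x" "x \<le> x'" for x x'
      unfolding F_def
      by (rule pos_mono[OF pos0']) (use that e0 in \<open>auto simp: less_eq_vec_def intro: mult_left_mono\<close>)
    have F0: "0 \<le> F 0" using pos0' y0 by (simp add: F_def)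
    have cont: "isCont F x" for x
      unfolding F_def by (intro continuous_intros bounded_linear.isCont[OF matrix_vector_mul_bounded_linear])
    have nb: "norm ((F ^^ k) 0) \<le> 2 * K * norm y" for k
    proof (induction k)
      case 0 then show ?case using K by simp
    next
      case (Suc k)
      define x where "x = (F ^^ k) 0"
      have nx: "norm x \<le> 2 * K * norm y" using Suc by (simp add: x_def)
      have "norm (F x) \<le> norm (y + \<epsilon> *\<^sub>R x) * K" unfolding F_def by (rule K(2))
      also have "\<dots> \<le> (norm y + \<epsilon> * norm x) * K"
        using K e0 norm_triangle_ineq[of y "\<epsilon> *\<^sub>R x"] by (intro mult_right_mono) auto
      also have "\<dots> = norm y * K + (\<epsilon> * K) * norm x" by (simp add: algebra_simps)
      also have "\<dots> \<le> norm y * K + (1/2) * (2 * K * norm y)"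
        using mult_mono[OF eK nx] K by simp
      finally show ?case by (simp add: x_def algebra_simps)
    qed
    have bnd: "(F ^^ k) 0 \<le> (\<chi> j. 2 * K * norm y)" for k
      using nb[of k] comp_le_norm[of "(F ^^ k) 0"] by (auto simp: less_eq_vec_def intro: order_trans)
    obtain x where x: "0 \<le> x" "F x = x"
      using mono_iter_fix[OF cont mono F0 bnd] by auto
    have "(t0 *\<^sub>R mat 1 - P) *v x = y + \<epsilon> *\<^sub>R x"
      using inv_r[OF inv0, of "y + \<epsilon> *\<^sub>R x"] x(2) by (simp add: F_def R0_def)
    then have "(t *\<^sub>R mat 1 - P) *v x = y"
      unfolding Qv \<epsilon>_def by (simp add: algebra_simps scaleR_diff_left)
    then show "0 \<le> matrix_inv (t *\<^sub>R mat 1 - P) *v y"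
      using inv_l[OF invt, of x] x(1) by simp
  qed
qed

lemma Minv_pos:
  fixes P :: "real^'n^'n"
  assumes P0: "\<forall>i j. 0 \<le> P $ i $ j" and s: "spec_radius P \<le> s"
    and invs: "invertible (s *\<^sub>R mat 1 - P)" and y0: "0 \<le> y"
  shows "0 \<le> matrix_inv (s *\<^sub>R mat 1 - P) *v y"
proof -
  define pos where "pos t \<longleftrightarrow> (\<forall>y. 0 \<le> y \<longrightarrow> 0 \<le> matrix_inv (t *\<^sub>R mat 1 - P) *v y)" for t
  have inv: "invertible (t *\<^sub>R mat 1 - P)" if "s \<le> t" for t
  proof (cases "t = s")
    case True then show ?thesis using invs by simp
  next
    case False then show ?thesis using that s by (intro inv_gt_specrad) simp
  qed
  define c where "c = (\<Sum>i\<in>UNIV. \<Sum>j\<in>UNIV. P $ i $ j)"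
  define T where "T = {t. s \<le> t \<and> (\<forall>u\<ge>t. pos u)}"
  have t1T: "max s (c+1) \<in> T"
    unfolding T_def pos_def using inv by (auto intro!: base_pos[OF P0] simp: c_def)
  have Tne: "T \<noteq> {}" using t1T by auto
  have Tb: "bdd_below T" unfolding T_def by (auto intro: bdd_belowI[of _ s])
  define ts where "ts = Inf T"
  have sts: "s \<le> ts" unfolding ts_def by (rule cInf_greatest[OF Tne]) (auto simp: T_def)
  have gt: "pos u" if ut: "u > ts" for u
  proof -
    obtain t where "t \<in> T" "t < u" using cInf_less_iff[OF Tne Tb] ut ts_def by auto
    then show ?thesis by (auto simp: T_def)
  qed
  have "pos ts" unfolding pos_def
    using closure_pos[OF inv[OF sts]] gt inv sts by (auto simp: pos_def)
  then have tsT: "ts \<in> T" using gt sts unfolding T_def by (auto simp: order_le_less)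
  have "ts = s"
  proof (rule ccontr)
    assume "ts \<noteq> s"
    then have lt: "s < ts" using sts by simp
    obtain \<delta> where d: "\<delta> > 0" "\<forall>t. ts - \<delta> < t \<longrightarrow> t \<le> ts \<longrightarrow> invertible (t *\<^sub>R mat 1 - P) \<longrightarrow> pos t"
      using step_pos[OF inv[OF sts]] \<open>pos ts\<close> unfolding pos_def by blast
    define t' where "t' = max s (ts - \<delta>/2)"
    have "t' \<in> T" unfolding T_def
    proof (intro CollectI conjI allI impI)
      show "s \<le> t'" by (simp add: t'_def)
      fix u assume u: "t' \<le> u"
      show "pos u"
      proof (cases "u \<le> ts")
        case True
        then show ?thesis using d u inv[of u] by (auto simp: t'_def)
      next
        case False then show ?thesis using gt by simp
      qed
    qed
    then have "ts \<le> t'" unfolding ts_def by (rule cInf_lower[OF _ Tb])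
    moreover have "t' < ts" using lt d by (simp add: t'_def)
    ultimately show False by simp
  qed
  then show ?thesis using \<open>pos ts\<close> y0 by (simp add: pos_def)
qed

lemma Minv_nonneg:
  assumes "nonsingular_M_matrix (M::real^'n^'n)" "0 \<le> y"
  shows "0 \<le> matrix_inv M *v y"
proof -
  obtain s P where M: "M = s *\<^sub>R mat 1 - P" "\<forall>i j. 0 \<le> P $ i $ j" "s \<ge> spec_radius P"
    and inv: "invertible M"
    using assms(1) unfolding nonsingular_M_matrix_def M_matrix_def by blast
  show ?thesis using Minv_pos[OF M(2) M(3) _ assms(2)] inv M(1) by simp
qed



lemma lin_expand:
  assumes "linear (f :: real^'n \<Rightarrow> real)"
  shows "f x = (\<Sum>k\<in>UNIV. x $ k * f (axis k 1))"
proof -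
  interpret linear f by fact
  have "f x = f (\<Sum>k\<in>UNIV. x $ k *\<^sub>R axis k 1)"
    using basis_expansion[of x] by (simp add: scalar_mult_eq_scaleR)
  also have "\<dots> = (\<Sum>k\<in>UNIV. x $ k * f (axis k 1))" by (simp add: sum scale)
  finally show ?thesis .
qed

theorem mainTheorem4:
  fixes M :: "real^'n^'n" and a :: "real^'n" and b :: "real^'n \<Rightarrow> real^'n \<Rightarrow> real^'n"
  assumes "nonsingular_M_matrix M"
    and "0 \<le> a"
    and "bilinear b"
    and "\<And>x y. 0 \<le> x \<Longrightarrow> 0 \<le> y \<Longrightarrow> 0 \<le> b x y"
  shows "((\<exists>x. qve_solution M a b x) \<longleftrightarrow> condition_A1 M a b)
     \<and> ((\<exists>x. qve_solution M a b x) \<longrightarrow> (\<exists>x. qve_minimal_solution M a b x))"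
proof -
  define R where "R = matrix_inv M"
  define F where "F x = R *v (a + b x x)" for x
  have invM: "invertible M" using assms(1) by (simp add: nonsingular_M_matrix_def)
  have Rpos: "\<forall>y. 0 \<le> y \<longrightarrow> 0 \<le> R *v y" using Minv_nonneg[OF assms(1)] by (simp add: R_def)
  have sol_iff: "qve_solution M a b x \<longleftrightarrow> 0 \<le> x \<and> F x = x" for x
  proof
    assume "qve_solution M a b x"
    then show "0 \<le> x \<and> F x = x"
      using inv_l[OF invM, of x] by (auto simp: qve_solution_def F_def R_def)
  next
    assume "0 \<le> x \<and> F x = x"
    then show "qve_solution M a b x"
      using inv_r[OF invM, of "a + b x x"] by (auto simp: qve_solution_def F_def R_def)
  qed
  have bmono: "b x x \<le> b y y" if "0 \<le> x" "x \<le> y" for x y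
  proof -
    have "b y y - b x x = b (y - x) y + b x (y - x)"
      using assms(3) by (simp add: bilinear_lsub bilinear_rsub)
    moreover have "0 \<le> b (y - x) y" using that by (intro assms(4)) (auto simp: less_eq_vec_def intro: order_trans)
    moreover have "0 \<le> b x (y - x)" using that by (intro assms(4)) (auto simp: less_eq_vec_def)
    ultimately have "0 \<le> b y y - b x x" by simp
    then show ?thesis by (simp add: less_eq_vec_def)
  qed
  have Fmono: "F x \<le> F y" if "0 \<le> x" "x \<le> y" for x y
    unfolding F_def by (rule pos_mono[OF Rpos]) (use bmono[OF that] in \<open>simp add: less_eq_vec_def\<close>)
  have Fnn: "0 \<le> F x" if "0 \<le> x" for x
    unfolding F_def using Rpos assms(2) assms(4)[OF that that] by (simp add: add_nonneg_nonneg)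
  have F0: "0 \<le> F 0" by (rule Fnn) simp
  have cont: "isCont F x" for x
  proof -
    have cb: "isCont (\<lambda>x. b x x) x"
      using bilinear_continuous_compose[of "at x" "\<lambda>x. x" "\<lambda>x. x" b] assms(3) by (simp add: continuous_ident)
    have "isCont (\<lambda>x. a + b x x) x" using continuous_add[OF continuous_const cb] .
    then show ?thesis unfolding F_def by (rule bounded_linear.isCont[OF matrix_vector_mul_bounded_linear])
  qed
  have minimal: "\<exists>x. qve_minimal_solution M a b x" if "qve_solution M a b y" for y
  proof -
    have y: "0 \<le> y" "F y = y" using that sol_iff by auto
    have bnd: "(F ^^ k) 0 \<le> y" for k
    proof (induction k)
      case 0 then show ?case using y by simp
    next
      case (Suc k)
      have "0 \<le> (F ^^ k) 0" by (induction k) (auto simp: Fnn)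
      then show ?case using Fmono[OF _ Suc] y by simp
    qed
    obtain x where x: "0 \<le> x" "F x = x" "\<forall>y. 0 \<le> y \<longrightarrow> F y \<le> y \<longrightarrow> x \<le> y"
      using mono_iter_fix[OF cont Fmono F0 bnd] by blast
    then show ?thesis unfolding qve_minimal_solution_def using sol_iff by auto
  qed
  have dir1: "condition_A1 M a b" if "qve_solution M a b xs" for xs
  proof -
    have xs: "0 \<le> xs" "F xs = xs" using that sol_iff by auto
    obtain g where g: "bij_betw g {0..<card (UNIV::'n set)} (UNIV::'n set)"
      using ex_bij_betw_nat_finite[of "UNIV::'n set"] by auto
    define m where "m = card (UNIV::'n set)"
    have gs: "\<exists>i<m. g i = j" for j
      using g unfolding bij_betw_def m_def by (metis atLeastLessThan_iff imageE UNIV_I)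
    define l where "l x i = x $ g i" for x :: "real^'n" and i
    define z where "z i = xs $ g i" for i
    have wp: "weakly_positive m l"
      unfolding weakly_positive_def
    proof (intro conjI allI impI)
      fix i show "linear (\<lambda>x. l x i)" unfolding l_def
        using bounded_linear_vec_nth bounded_linear.linear by blast
    next
      fix x :: "real^'n" and i assume "0 \<le> x \<and> x \<noteq> 0" "i < m"
      then show "0 \<le> l x i" by (auto simp: l_def less_eq_vec_def)
    next
      fix x :: "real^'n" assume h: "0 \<le> x \<and> x \<noteq> 0"
      then obtain j where "x $ j \<noteq> 0" by (auto simp: vec_eq_iff)
      then show "\<exists>i<m. l x i \<noteq> 0" using gs[of j] by (auto simp: l_def)
    qed
    show ?thesis unfolding condition_A1_def
    proof (intro exI conjI allI impI)
      show "weakly_positive m l" by fact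
      fix i assume "i < m" then show "0 \<le> z i" using xs by (auto simp: z_def less_eq_vec_def)
    next
      fix x :: "real^'n" and i assume x0: "0 \<le> x" and lz: "\<forall>i<m. l x i \<le> z i" and im: "i < m"
      have "x \<le> xs" unfolding less_eq_vec_def
      proof
        fix j obtain k where "k < m" "g k = j" using gs by blast
        then show "x $ j \<le> xs $ j" using lz by (auto simp: l_def z_def)
      qed
      then have "F x \<le> F xs" by (rule Fmono[OF x0])
      then have "F x \<le> xs" using xs by simp
      then show "l (matrix_inv M *v (a + b x x)) i \<le> z i"
        by (simp add: l_def z_def F_def R_def less_eq_vec_def)
    qed
  qed
  have dir2: "\<exists>x. qve_solution M a b x" if hA1: "condition_A1 M a b"
  proof -
    obtain m l z where wp: "weakly_positive m l" and z0: "\<forall>i<m. 0 \<le> z i"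
      and A1: "\<forall>x. 0 \<le> x \<longrightarrow> (\<forall>i<m. l x i \<le> z i) \<longrightarrow> (\<forall>i<m. l (matrix_inv M *v (a + b x x)) i \<le> z i)"
      using hA1 unfolding condition_A1_def by blast
    have lin: "linear (\<lambda>x. l x i)" if "i < m" for i using wp that by (simp add: weakly_positive_def)
    have ax: "\<exists>i<m. 0 < l (axis j 1) i" for j
    proof -
      have "0 \<le> (axis j 1 :: real^'n)" by (simp add: less_eq_vec_def axis_def)
      moreover have "(axis j 1 :: real^'n) \<noteq> 0" by (simp add: axis_eq_0_iff)
      ultimately obtain i where "i < m" "l (axis j 1) i \<noteq> 0" "0 \<le> l (axis j 1) i"
        using wp unfolding weakly_positive_def by blast
      then show ?thesis by auto
    qed
    define \<iota> where "\<iota> j = (SOME i. i < m \<and> 0 < l (axis j 1) i)" for j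
    have \<iota>: "\<iota> j < m \<and> 0 < l (axis j 1) (\<iota> j)" for j
      unfolding \<iota>_def using someI_ex[OF ax[of j]] .
    define u where "u = (\<chi> j. z (\<iota> j) / l (axis j 1) (\<iota> j))"
    have xu: "x \<le> u" if x0: "0 \<le> x" and lz: "\<forall>i<m. l x i \<le> z i" for x
      unfolding less_eq_vec_def
    proof
      fix j
      define i where "i = \<iota> j"
      have im: "i < m" and pos: "0 < l (axis j 1) i" using \<iota>[of j] by (auto simp: i_def)
      have nn: "0 \<le> l (axis k 1) i" for k
      proof -
        have "0 \<le> (axis k 1 :: real^'n)" by (simp add: less_eq_vec_def axis_def)
        moreover have "(axis k 1 :: real^'n) \<noteq> 0" by (simp add: axis_eq_0_iff)
        ultimately show ?thesis using wp im unfolding weakly_positive_def by blast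
      qed
      have "x $ j * l (axis j 1) i \<le> (\<Sum>k\<in>UNIV. x $ k * l (axis k 1) i)"
        by (rule member_le_sum) (use x0 nn in \<open>auto simp: less_eq_vec_def\<close>)
      also have "\<dots> = l x i" using lin_expand[OF lin[OF im], of x] by simp
      also have "\<dots> \<le> z i" using lz im by simp
      finally show "x $ j \<le> u $ j" using pos by (simp add: u_def i_def pos_le_divide_eq)
    qed
    have I: "0 \<le> (F ^^ k) 0 \<and> (\<forall>i<m. l ((F ^^ k) 0) i \<le> z i)" for k
    proof (induction k)
      case 0
      have "l 0 i = 0" if "i < m" for i using linear_0[OF lin[OF that]] .
      then show ?case using z0 by simp
    next
      case (Suc k)
      then show ?case using A1 Fnn by (simp add: F_def R_def)
    qed
    have bnd: "(F ^^ k) 0 \<le> u" for k using I[of k] xu by blast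
    obtain x where "0 \<le> x" "F x = x"
      using mono_iter_fix[OF cont Fmono F0 bnd] by blast
    then show ?thesis using sol_iff by auto
  qed
  show ?thesis using dir1 dir2 minimal by blast
qed

end
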